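(* Let $(\hat q(k))_{k\ge1}$ be a sequence of positive numbers. (1) If for all $k$ large enough $$\hat q(k)\ge\frac{1}{1+\frac{1-p}{p}Q(k)}\Big(\sum_{i=1}^{\lfloor (k-1)/2\rfloor}q(i)\hat q(k-i)+\frac{1-p}{2p}q(k)^2+\mathbf 1_{\{k\text{ even}\}}\tfrac12 q(k/2)^2\Big),$$ then there is $C>0$ with $q(k)\le C\hat q(k)$ for all $k\ge1$. (2) If for all $k$ large enough $$\hat q(k)\le\frac{1}{1+\frac{1-p}{p}Q(k)}\sum_{i=1}^{\lfloor (k-1)/2\rfloor}q(i)\hat q(k-i),$$ then there is $c>0$ with $c\,\hat q(k)\le q(k)$ for all $k\ge1$.
   Context: A sign-decorated binary tree is a finite planar rooted tree in which every internal vertex (node) has exactly two ordered children and carries a sign $\oplus$ or $\ominus$; $\mathrm{LIS}(t)$ is the maximal number of leaves in a set of leaves whose pairwise highest common ancestors all carry $\oplus$. Fix $p\in(0,1)$. $T$ is a critical binary Bienaymé–Galton–Watson tree with i.i.d. node signs, $\mathbb P(\oplus)=p$; $q(k)=\mathbb P(\mathrm{LIS}(T)=k)>0$, $Q(k)=\mathbb P(\mathrm{LIS}(T)\ge k)$. These satisfy, for $k\ge2$, $q(k)=(1-p)q(k)\sum_{i=1}^{k-1}q(i)+p\sum_{i=1}^{\lfloor(k-1)/2\rfloor}q(i)q(k-i)+\frac{1-p}2q(k)^2+\mathbf 1_{\{k\text{ even}\}}\frac p2 q(k/2)^2$. *)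

theory Defs
  imports "HOL-Analysis.Analysis"
begin

text \<open>Sign-decorated finite planar binary trees. The Boolean at an internal
  node is its sign: True = plus, False = minus.\<close>
datatype stree = Leaf | Node bool stree stree

text \<open>Vertices are addressed by paths from the root (False = left child,
  True = right child).\<close>
fun subtree_at :: "stree \<Rightarrow> bool list \<Rightarrow> stree option" where
  "subtree_at t [] = Some t"
| "subtree_at Leaf (b # bs) = None"
| "subtree_at (Node s l r) (b # bs) = subtree_at (if b then r else l) bs"

definition leaves :: "stree \<Rightarrow> bool list set" where
  "leaves t = {u. subtree_at t u = Some Leaf}"

definition sign_at :: "stree \<Rightarrow> bool list \<Rightarrow> bool" where
  "sign_at t u = (case subtree_at t u of Some (Node s _ _) \<Rightarrow> s | _ \<Rightarrow> False)"

text \<open>Highest common ancestor of two vertices = longest common prefix of their paths.\<close>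
fun hca :: "bool list \<Rightarrow> bool list \<Rightarrow> bool list" where
  "hca (x # xs) (y # ys) = (if x = y then x # hca xs ys else [])"
| "hca _ _ = []"

definition LIS :: "stree \<Rightarrow> nat" where
  "LIS t = Max {card S | S. S \<subseteq> leaves t \<and>
             (\<forall>u\<in>S. \<forall>v\<in>S. u \<noteq> v \<longrightarrow> sign_at t (hca u v))}"

text \<open>Law of the critical binary BGW tree (0 or 2 children w.p. 1/2 each)
  with i.i.d. signs, P(plus) = p: probability of a given finite tree.\<close>
fun bgw_prob :: "real \<Rightarrow> stree \<Rightarrow> real" where
  "bgw_prob p Leaf = 1/2"
| "bgw_prob p (Node s l r) = 1/2 * (if s then p else 1 - p) * bgw_prob p l * bgw_prob p r"

definition q :: "real \<Rightarrow> nat \<Rightarrow> real" where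
  "q p k = infsum (bgw_prob p) {t. LIS t = k}"

definition Q :: "real \<Rightarrow> nat \<Rightarrow> real" where
  "Q p k = infsum (bgw_prob p) {t. LIS t \<ge> k}"

end

theory Submission
  imports Defs
begin


definition good :: "stree \<Rightarrow> bool list set \<Rightarrow> bool" where
  "good t S = (S \<subseteq> leaves t \<and> (\<forall>u\<in>S. \<forall>v\<in>S. u \<noteq> v \<longrightarrow> sign_at t (hca u v)))"

lemma leaves_Leaf[simp]: "leaves Leaf = {[]}"
proof -
  have "subtree_at Leaf u = Some Leaf \<longleftrightarrow> u = []" for u by (cases u) auto
  then show ?thesis unfolding leaves_def by auto
qed

lemma leaves_Node: "leaves (Node s l r) = (#) False ` leaves l \<union> (#) True ` leaves r"
proof -
  have "subtree_at (Node s l r) u = Some Leaf \<longleftrightarrow>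
     (\<exists>v. u = False # v \<and> subtree_at l v = Some Leaf) \<or> (\<exists>v. u = True # v \<and> subtree_at r v = Some Leaf)" for u
    by (cases u) auto
  then show ?thesis unfolding leaves_def by auto
qed

lemma finite_leaves[simp]: "finite (leaves t)"
  by (induction t) (auto simp: leaves_Node)

lemma sign_at_Node_Nil[simp]: "sign_at (Node s l r) [] = s"
  by (simp add: sign_at_def)

lemma sign_at_Node_Cons[simp]: "sign_at (Node s l r) (b # u) = sign_at (if b then r else l) u"
  by (simp add: sign_at_def)

lemma LIS_eq: "LIS t = Max (card ` {S. good t S})"
  unfolding LIS_def good_def by (simp only: image_Collect)

lemma good_fin: "finite {S. good t S}"
  by (rule finite_subset[of _ "Pow (leaves t)"]) (auto simp: good_def)

lemma good_empty: "good t {}" by (simp add: good_def)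

lemma LIS_ub: "good t S \<Longrightarrow> card S \<le> LIS t"
  unfolding LIS_eq using good_fin by (intro Max_ge) auto

lemma LIS_ex: "\<exists>S. good t S \<and> card S = LIS t"
proof -
  have "LIS t \<in> card ` {S. good t S}" unfolding LIS_eq
    using good_fin good_empty by (intro Max_in) auto
  then show ?thesis by auto
qed

lemma good_finite: "good t S \<Longrightarrow> finite S"
  by (meson finite_leaves finite_subset good_def)

lemma good_Node_D:
  assumes "good (Node s l r) S"
  shows "\<exists>A B. S = (#) False ` A \<union> (#) True ` B \<and> good l A \<and> good r B \<and> (\<not> s \<longrightarrow> A = {} \<or> B = {})"
proof -
  define A where "A = {u. False # u \<in> S}"
  define B where "B = {u. True # u \<in> S}"
  have sub: "S \<subseteq> leaves (Node s l r)" and sg: "\<And>u v. u\<in>S \<Longrightarrow> v\<in>S \<Longrightarrow> u \<noteq> v \<Longrightarrow> sign_at (Node s l r) (hca u v)"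
    using assms by (auto simp: good_def)
  have S: "S = (#) False ` A \<union> (#) True ` B"
  proof
    show "S \<subseteq> (#) False ` A \<union> (#) True ` B"
    proof
      fix x assume "x \<in> S"
      then have "x \<in> leaves (Node s l r)" using sub by auto
      then obtain b v where "x = b # v" by (auto simp: leaves_Node)
      then show "x \<in> (#) False ` A \<union> (#) True ` B" using \<open>x \<in> S\<close> by (cases b) (auto simp: A_def B_def)
    qed
  qed (auto simp: A_def B_def)
  have gA: "good l A"
    unfolding good_def
  proof safe
    fix u assume "u \<in> A" then have "False # u \<in> leaves (Node s l r)" using sub by (auto simp: A_def)
    then show "u \<in> leaves l" by (auto simp: leaves_Node)
  next
    fix u v assume "u \<in> A" "v \<in> A" "u \<noteq> v"
    then have "sign_at (Node s l r) (hca (False # u) (False # v))" by (intro sg) (auto simp: A_def)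
    then show "sign_at l (hca u v)" by simp
  qed
  have gB: "good r B"
    unfolding good_def
  proof safe
    fix u assume "u \<in> B" then have "True # u \<in> leaves (Node s l r)" using sub by (auto simp: B_def)
    then show "u \<in> leaves r" by (auto simp: leaves_Node)
  next
    fix u v assume "u \<in> B" "v \<in> B" "u \<noteq> v"
    then have "sign_at (Node s l r) (hca (True # u) (True # v))" by (intro sg) (auto simp: B_def)
    then show "sign_at r (hca u v)" by simp
  qed
  have "\<not> s \<longrightarrow> A = {} \<or> B = {}"
  proof (rule impI, rule ccontr)
    assume "\<not> s" "\<not> (A = {} \<or> B = {})"
    then obtain u v where "u \<in> A" "v \<in> B" by auto
    then have "sign_at (Node s l r) (hca (False # u) (True # v))" by (intro sg) (auto simp: A_def B_def)
    then show False using \<open>\<not> s\<close> by simp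
  qed
  with S gA gB show ?thesis by blast
qed

lemma good_Node_I:
  assumes "good l A" "good r B" "\<not> s \<longrightarrow> A = {} \<or> B = {}"
  shows "good (Node s l r) ((#) False ` A \<union> (#) True ` B)"
proof -
  have sA: "A \<subseteq> leaves l" and gA: "\<And>u v. u\<in>A \<Longrightarrow> v\<in>A \<Longrightarrow> u \<noteq> v \<Longrightarrow> sign_at l (hca u v)"
    using assms(1) by (auto simp: good_def)
  have sB: "B \<subseteq> leaves r" and gB: "\<And>u v. u\<in>B \<Longrightarrow> v\<in>B \<Longrightarrow> u \<noteq> v \<Longrightarrow> sign_at r (hca u v)"
    using assms(2) by (auto simp: good_def)
  have 1: "(#) False ` A \<union> (#) True ` B \<subseteq> leaves (Node s l r)"
    unfolding leaves_Node using sA sB by blast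
  have 2: "sign_at (Node s l r) (hca x y)" if "x \<in> (#) False ` A \<union> (#) True ` B" "y \<in> (#) False ` A \<union> (#) True ` B" "x \<noteq> y" for x y
  proof -
    from that(1) obtain b u where x: "x = b # u" "(b \<and> u \<in> B) \<or> (\<not> b \<and> u \<in> A)" by blast
    from that(2) obtain c v where y: "y = c # v" "(c \<and> v \<in> B) \<or> (\<not> c \<and> v \<in> A)" by blast
    show ?thesis
    proof (cases "b = c")
      case True
      then have "u \<noteq> v" using that(3) x y by simp
      then show ?thesis using x y True gA gB by (cases c) auto
    next
      case False
      then have "s" using assms(3) x y by (cases b; cases c) auto
      then show ?thesis using x y False by simp
    qed
  qed
  show ?thesis unfolding good_def using 1 2 by blast
qed

lemma card_Node_set:
  assumes "good l A" "good r B"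
  shows "card ((#) False ` A \<union> (#) True ` B) = card A + card B"
proof -
  have "card ((#) False ` A \<union> (#) True ` B) = card ((#) False ` A) + card ((#) True ` B)"
    using assms good_finite by (intro card_Un_disjoint) auto
  also have "\<dots> = card A + card B" by (simp add: card_image)
  finally show ?thesis .
qed

lemma LIS_Node: "LIS (Node s l r) = (if s then LIS l + LIS r else max (LIS l) (LIS r))"
proof -
  obtain A where A: "good l A" "card A = LIS l" using LIS_ex by blast
  obtain B where B: "good r B" "card B = LIS r" using LIS_ex by blast
  have ub: "LIS (Node s l r) \<le> (if s then LIS l + LIS r else max (LIS l) (LIS r))"
  proof -
    obtain S where S: "good (Node s l r) S" "card S = LIS (Node s l r)" using LIS_ex by blast
    then obtain A' B' where AB: "S = (#) False ` A' \<union> (#) True ` B'" "good l A'" "good r B'"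
       "\<not> s \<longrightarrow> A' = {} \<or> B' = {}" using good_Node_D by blast
    then have "card S = card A' + card B'" using card_Node_set by simp
    moreover have "card A' \<le> LIS l" "card B' \<le> LIS r" using AB LIS_ub by auto
    ultimately show ?thesis using S AB(4) by (cases s) auto
  qed
  have lb: "(if s then LIS l + LIS r else max (LIS l) (LIS r)) \<le> LIS (Node s l r)"
  proof (cases s)
    case True
    have "good (Node s l r) ((#) False ` A \<union> (#) True ` B)" using A(1) B(1) by (rule good_Node_I) (simp add: True)
    then have "card ((#) False ` A \<union> (#) True ` B) \<le> LIS (Node s l r)" by (rule LIS_ub)
    then show ?thesis using card_Node_set[OF A(1) B(1)] A(2) B(2) True by simp
  next
    case False
    have "good (Node s l r) ((#) False ` A \<union> (#) True ` {})" using A(1) good_empty by (rule good_Node_I) simp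
    then have "card ((#) False ` A \<union> (#) True ` {}) \<le> LIS (Node s l r)" by (rule LIS_ub)
    then have 1: "LIS l \<le> LIS (Node s l r)" using card_Node_set[OF A(1) good_empty] A(2) by simp
    have "good (Node s l r) ((#) False ` {} \<union> (#) True ` B)" using good_empty B(1) by (rule good_Node_I) simp
    then have "card ((#) False ` {} \<union> (#) True ` B) \<le> LIS (Node s l r)" by (rule LIS_ub)
    then have 2: "LIS r \<le> LIS (Node s l r)" using card_Node_set[OF good_empty B(1)] B(2) by simp
    show ?thesis using 1 2 False by simp
  qed
  from ub lb show ?thesis by (rule antisym)
qed

lemma LIS_Leaf[simp]: "LIS Leaf = 1"
proof -
  have "good Leaf {[]}" by (simp add: good_def)
  then have "1 \<le> LIS Leaf" using LIS_ub by fastforce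
  moreover have "card S \<le> 1" if "good Leaf S" for S
  proof -
    have "S \<subseteq> {[]}" using that by (simp add: good_def)
    then have "card S \<le> card {[]::bool list}" by (intro card_mono) auto
    then show ?thesis by simp
  qed
  moreover obtain S where "good Leaf S" "card S = LIS Leaf" using LIS_ex by blast
  ultimately show ?thesis by (metis le_antisym)
qed

lemma LIS_pos: "LIS t \<ge> 1"
  by (induction t) (auto simp: LIS_Node)



definition H :: "nat \<Rightarrow> stree set" where "H n = {t. size t \<le> n}"
definition NT :: "stree \<times> stree \<Rightarrow> stree" where "NT = (\<lambda>(l,r). Node True l r)"
definition NF :: "stree \<times> stree \<Rightarrow> stree" where "NF = (\<lambda>(l,r). Node False l r)"
definition bb :: "real \<Rightarrow> stree \<times> stree \<Rightarrow> real" where "bb p = (\<lambda>(l,r). bgw_prob p l * bgw_prob p r)"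

context
  fixes p :: real
  assumes p0: "0 < p" and p1: "p < 1"
begin

lemma b_pos: "bgw_prob p t > 0"
  using p0 p1 by (induction t) auto

lemma b_nonneg: "bgw_prob p t \<ge> 0"
  using b_pos less_imp_le by blast

lemma mix: "p * X + (1 - p) * X = (X::real)" by (simp add: algebra_simps)



lemma inj_NT: "inj NT" by (auto simp: NT_def inj_def)
lemma inj_NF: "inj NF" by (auto simp: NF_def inj_def)

lemma H_0: "H 0 = {Leaf}"
proof -
  have "size t \<le> 0 \<longleftrightarrow> t = Leaf" for t by (cases t) auto
  then show ?thesis by (auto simp: H_def)
qed

lemma H_Suc: "H (Suc n) \<subseteq> insert Leaf (NT ` (H n \<times> H n) \<union> NF ` (H n \<times> H n))"
proof
  fix t assume "t \<in> H (Suc n)"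
  then have sz: "size t \<le> Suc n" by (simp add: H_def)
  show "t \<in> insert Leaf (NT ` (H n \<times> H n) \<union> NF ` (H n \<times> H n))"
  proof (cases t)
    case Leaf then show ?thesis by simp
  next
    case (Node s l r)
    then have "l \<in> H n" "r \<in> H n" using sz by (auto simp: H_def)
    then show ?thesis using Node by (cases s) (auto simp: NT_def NF_def image_iff)
  qed
qed

lemma H_finite: "finite (H n)"
proof (induction n)
  case 0 then show ?case by (simp add: H_0)
next
  case (Suc n)
  have "finite (insert Leaf (NT ` (H n \<times> H n) \<union> NF ` (H n \<times> H n)))" using Suc by simp
  then show ?case by (rule finite_subset[OF H_Suc])
qed

lemma sum_prod_b: "sum (\<lambda>(l,r). bgw_prob p l * bgw_prob p r) (X \<times> Y) = sum (bgw_prob p) X * sum (bgw_prob p) Y"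
  by (simp add: sum.cartesian_product[symmetric] sum_product)

lemma H_sum: "sum (bgw_prob p) (H n) \<le> 1"
proof (induction n)
  case 0 then show ?case by (simp add: H_0)
next
  case (Suc n)
  define S where "S = sum (bgw_prob p) (H n)"
  have S0: "S \<ge> 0" unfolding S_def by (intro sum_nonneg b_nonneg)
  have S1: "S \<le> 1" using Suc S_def by simp
  have fin: "finite (H n \<times> H n)" using H_finite by simp
  have dis: "NT ` (H n \<times> H n) \<inter> NF ` (H n \<times> H n) = {}" by (auto simp: NT_def NF_def)
  have LeafN: "Leaf \<notin> NT ` (H n \<times> H n) \<union> NF ` (H n \<times> H n)" by (auto simp: NT_def NF_def)
  have eT: "sum (bgw_prob p) (NT ` (H n \<times> H n)) = 1/2 * p * S^2"
  proof -
    have "sum (bgw_prob p) (NT ` (H n \<times> H n)) = sum (bgw_prob p \<circ> NT) (H n \<times> H n)"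
      by (rule sum.reindex[OF inj_on_subset[OF inj_NT subset_UNIV]])
    also have "\<dots> = sum (\<lambda>x. 1/2 * p * (case x of (l,r) \<Rightarrow> bgw_prob p l * bgw_prob p r)) (H n \<times> H n)"
      by (intro sum.cong) (auto simp: NT_def)
    also have "\<dots> = 1/2 * p * sum (\<lambda>(l,r). bgw_prob p l * bgw_prob p r) (H n \<times> H n)"
      by (rule sum_distrib_left[symmetric])
    also have "\<dots> = 1/2 * p * S^2"
      by (simp add: sum_prod_b S_def power2_eq_square)
    finally show ?thesis .
  qed
  have eF: "sum (bgw_prob p) (NF ` (H n \<times> H n)) = 1/2 * (1-p) * S^2"
  proof -
    have "sum (bgw_prob p) (NF ` (H n \<times> H n)) = sum (bgw_prob p \<circ> NF) (H n \<times> H n)"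
      by (rule sum.reindex[OF inj_on_subset[OF inj_NF subset_UNIV]])
    also have "\<dots> = sum (\<lambda>x. 1/2 * (1-p) * (case x of (l,r) \<Rightarrow> bgw_prob p l * bgw_prob p r)) (H n \<times> H n)"
      by (intro sum.cong) (auto simp: NF_def)
    also have "\<dots> = 1/2 * (1-p) * sum (\<lambda>(l,r). bgw_prob p l * bgw_prob p r) (H n \<times> H n)"
      by (rule sum_distrib_left[symmetric])
    also have "\<dots> = 1/2 * (1-p) * S^2"
      by (simp add: sum_prod_b S_def power2_eq_square)
    finally show ?thesis .
  qed
  have "sum (bgw_prob p) (H (Suc n)) \<le> sum (bgw_prob p) (insert Leaf (NT ` (H n \<times> H n) \<union> NF ` (H n \<times> H n)))"
    using H_Suc H_finite by (intro sum_mono2 b_nonneg) auto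
  also have "\<dots> = 1/2 + 1/2 * p * S^2 + 1/2 * (1-p) * S^2"
    using fin LeafN dis eT eF by (simp add: sum.union_disjoint)
  also have "\<dots> = 1/2 + 1/2 * (p * S^2 + (1-p) * S^2)" by (simp only: distrib_left mult.assoc add.assoc)
  also have "\<dots> = 1/2 + 1/2 * S^2" by (simp add: mix)
  also have "\<dots> \<le> 1"
  proof -
    have "S^2 \<le> 1" using S0 S1 by (rule power_le_one)
    then show ?thesis by simp
  qed
  finally show ?case .
qed

lemma size_H: "size t \<le> n \<Longrightarrow> t \<in> H n" by (simp add: H_def)

lemma summable_b: "bgw_prob p summable_on A"
proof -
  have "bgw_prob p summable_on UNIV"
  proof (rule nonneg_bdd_above_summable_on)
    show "bdd_above (sum (bgw_prob p) ` {F. F \<subseteq> UNIV \<and> finite F})"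
    proof (rule bdd_aboveI2)
      fix F assume "F \<in> {F. F \<subseteq> (UNIV :: stree set) \<and> finite F}"
      then have fF: "finite F" by simp
      have "F \<subseteq> H (\<Sum>t\<in>F. size t)"
        using fF by (auto intro!: size_H member_le_sum)
      then have "sum (bgw_prob p) F \<le> sum (bgw_prob p) (H (\<Sum>t\<in>F. size t))"
        using H_finite b_nonneg by (intro sum_mono2) auto
      also have "\<dots> \<le> 1" by (rule H_sum)
      finally show "sum (bgw_prob p) F \<le> 1" .
    qed
  qed (simp add: b_nonneg)
  then show ?thesis by (rule summable_on_subset) simp
qed


lemma summable_bb: "(bb p) summable_on A"
proof -
  have "(bb p) summable_on UNIV"
  proof (rule nonneg_bdd_above_summable_on)
    show "bdd_above (sum (bb p) ` {F. F \<subseteq> UNIV \<and> finite F})"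
    proof (rule bdd_aboveI2)
      fix F assume "F \<in> {F. F \<subseteq> (UNIV :: (stree \<times> stree) set) \<and> finite F}"
      then have fF: "finite F" by simp
      define n where "n = (\<Sum>t\<in>F. size (fst t) + size (snd t))"
      have "F \<subseteq> H n \<times> H n"
      proof
        fix x assume "x \<in> F"
        then have "size (fst x) + size (snd x) \<le> n" unfolding n_def using fF
          by (intro member_le_sum[where f="\<lambda>t. size (fst t) + size (snd t)"]) auto
        then show "x \<in> H n \<times> H n" by (cases x) (auto simp: H_def)
      qed
      then have "sum (bb p) F \<le> sum (bb p) (H n \<times> H n)"
        using H_finite b_nonneg by (intro sum_mono2) (auto simp: bb_def)
      also have "\<dots> = sum (bgw_prob p) (H n) * sum (bgw_prob p) (H n)"
        unfolding bb_def by (rule sum_prod_b)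
      also have "\<dots> \<le> 1 * 1" using H_sum b_nonneg
        by (intro mult_mono) (auto intro: sum_nonneg)
      finally show "sum (bb p) F \<le> 1" by simp
    qed
  qed (auto simp: bb_def b_nonneg)
  then show ?thesis by (rule summable_on_subset) simp
qed

lemma infsum_bb_prod: "infsum (bb p) (X \<times> Y) = infsum (bgw_prob p) X * infsum (bgw_prob p) Y"
proof -
  have "infsum (bb p) (X \<times> Y) = infsum (\<lambda>x. infsum (\<lambda>y. (bb p) (x,y)) Y) X"
    using summable_bb by (intro infsum_Sigma_banach[symmetric]) auto
  also have "\<dots> = infsum (\<lambda>x. bgw_prob p x * infsum (bgw_prob p) Y) X"
    by (intro infsum_cong) (simp add: bb_def infsum_cmult_right summable_b)
  also have "\<dots> = infsum (bgw_prob p) X * infsum (bgw_prob p) Y"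
    by (simp add: infsum_cmult_left summable_b)
  finally show ?thesis .
qed

lemma decomp: "infsum (bgw_prob p) A = (if Leaf \<in> A then 1/2 else 0)
   + 1/2 * p * infsum (bb p) (NT -` A) + 1/2 * (1-p) * infsum (bb p) (NF -` A)"
proof -
  have A: "A = (A \<inter> {Leaf}) \<union> (NT ` (NT -` A) \<union> NF ` (NF -` A))"
  proof (intro equalityI subsetI)
    fix t assume "t \<in> A" then show "t \<in> (A \<inter> {Leaf}) \<union> (NT ` (NT -` A) \<union> NF ` (NF -` A))"
      by (cases t rule: stree.exhaust) (auto simp: NT_def NF_def image_iff split: if_splits
              intro: exI[of _ "(l, r)" for l r])
  qed auto
  have "infsum (bgw_prob p) A = infsum (bgw_prob p) (A \<inter> {Leaf}) + (infsum (bgw_prob p) (NT ` (NT -` A)) + infsum (bgw_prob p) (NF ` (NF -` A)))"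
    apply (subst A)
    apply (subst infsum_Un_disjoint)
       apply (simp_all add: summable_b)
     apply (auto simp: NT_def NF_def)[1]
    apply (subst infsum_Un_disjoint)
       apply (simp_all add: summable_b)
    apply (auto simp: NT_def NF_def)
    done
  also have "infsum (bgw_prob p) (A \<inter> {Leaf}) = (if Leaf \<in> A then 1/2 else 0)"
    by (cases "Leaf \<in> A") auto
  also have "infsum (bgw_prob p) (NT ` (NT -` A)) = 1/2 * p * infsum (bb p) (NT -` A)"
  proof -
    have "infsum (bgw_prob p) (NT ` (NT -` A)) = infsum (bgw_prob p \<circ> NT) (NT -` A)"
      by (rule infsum_reindex[OF inj_on_subset[OF inj_NT subset_UNIV]])
    also have "\<dots> = infsum (\<lambda>x. 1/2 * p * (bb p) x) (NT -` A)"
      by (intro infsum_cong) (auto simp: NT_def bb_def)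
    also have "\<dots> = 1/2 * p * infsum (bb p) (NT -` A)"
      by (intro infsum_cmult_right summable_bb)
    finally show ?thesis .
  qed
  also have "infsum (bgw_prob p) (NF ` (NF -` A)) = 1/2 * (1-p) * infsum (bb p) (NF -` A)"
  proof -
    have "infsum (bgw_prob p) (NF ` (NF -` A)) = infsum (bgw_prob p \<circ> NF) (NF -` A)"
      by (rule infsum_reindex[OF inj_on_subset[OF inj_NF subset_UNIV]])
    also have "\<dots> = infsum (\<lambda>x. 1/2 * (1-p) * (bb p) x) (NF -` A)"
      by (intro infsum_cong) (auto simp: NF_def bb_def)
    also have "\<dots> = 1/2 * (1-p) * infsum (bb p) (NF -` A)"
      by (intro infsum_cmult_right summable_bb)
    finally show ?thesis .
  qed
  finally show ?thesis by simp
qed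

lemma total: "infsum (bgw_prob p) UNIV = 1"
proof -
  define T where "T = infsum (bgw_prob p) UNIV"
  have d: "T = 1/2 + 1/2 * p * infsum (bb p) UNIV + 1/2 * (1-p) * infsum (bb p) UNIV"
    using decomp[of UNIV] by (simp add: T_def)
  have e: "infsum (bb p) UNIV = T * T"
    using infsum_bb_prod[of UNIV UNIV] by (simp add: T_def)
  have "T = 1/2 + 1/2 * (p * (T * T) + (1-p) * (T * T))"
    using d unfolding e by (simp only: distrib_left mult.assoc add.assoc)
  then have "T = 1/2 + 1/2 * (T * T)" by (simp only: mix)
  then have "(T - 1)^2 = 0" by (simp add: power2_eq_square algebra_simps)
  then show ?thesis by (simp add: T_def)
qed

end


lemma halfsum:
  fixes f :: "nat \<Rightarrow> real"
  assumes f0: "f 0 = 0" and k1: "k \<ge> 1"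
  shows "(\<Sum>i=0..k. f i * f (k-i)) = 2 * (\<Sum>i=1..(k-1) div 2. f i * f (k-i)) + (if even k then (f (k div 2))^2 else 0)"
proof -
  define g where "g i = f i * f (k-i)" for i
  define A where "A = {i\<in>{0..k}. 2*i<k}"
  define B where "B = {i\<in>{0..k}. 2*i>k}"
  define C where "C = {i\<in>{0..k}. 2*i=k}"
  have split: "{0..k} = A \<union> B \<union> C" by (auto simp: A_def B_def C_def)
  have s1: "sum g {0..k} = sum g A + sum g B + sum g C"
  proof -
    have fin: "finite A" "finite B" "finite C" by (auto simp: A_def B_def C_def)
    have "sum g (A \<union> B \<union> C) = sum g (A \<union> B) + sum g C"
      using fin by (intro sum.union_disjoint) (auto simp: A_def B_def C_def)
    moreover have "sum g (A \<union> B) = sum g A + sum g B"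
      using fin by (intro sum.union_disjoint) (auto simp: A_def B_def C_def)
    ultimately show ?thesis unfolding split by simp
  qed
  have sB: "sum g B = sum g A"
  proof (rule sum.reindex_bij_witness[of B "\<lambda>i. k-i" "\<lambda>i. k-i"])
    show "\<And>a. a \<in> B \<Longrightarrow> k - (k - a) = a" by (auto simp: B_def)
    show "\<And>a. a \<in> B \<Longrightarrow> k - a \<in> A" by (auto simp: A_def B_def)
    show "\<And>b. b \<in> A \<Longrightarrow> k - (k - b) = b" by (auto simp: A_def)
    show "\<And>b. b \<in> A \<Longrightarrow> k - b \<in> B" by (auto simp: A_def B_def)
    show "\<And>a. a \<in> B \<Longrightarrow> g (k - a) = g a" by (auto simp: B_def g_def)
  qed
  have Aeq: "A = {0..(k-1) div 2}" unfolding A_def using k1 by auto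
  have sA: "sum g A = (\<Sum>i=1..(k-1) div 2. g i)"
    unfolding Aeq by (simp add: sum.atLeast_Suc_atMost g_def f0)
  have sC: "sum g C = (if even k then (f (k div 2))^2 else 0)"
  proof (cases "even k")
    case True
    then have "C = {k div 2}" by (auto simp: C_def)
    moreover have "k - k div 2 = k div 2" using True by auto
    ultimately show ?thesis using True by (simp add: g_def power2_eq_square)
  next
    case False
    then have "C = {}" by (auto simp: C_def)
    then show ?thesis using False by simp
  qed
  show ?thesis using s1 sB sA sC by (simp add: g_def)
qed

fun comb :: "nat \<Rightarrow> stree" where
  "comb 0 = Leaf"
| "comb (Suc n) = Node True Leaf (comb n)"

lemma LIS_comb: "LIS (comb n) = Suc n"
  by (induction n) (auto simp: LIS_Node)

context
  fixes p :: real
  assumes p0: "0 < p" and p1: "p < 1"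
begin

lemma q_nonneg: "q p k \<ge> 0"
  unfolding q_def by (intro infsum_nonneg b_nonneg[OF p0 p1])

lemma Q_nonneg: "Q p k \<ge> 0"
  unfolding Q_def by (intro infsum_nonneg b_nonneg[OF p0 p1])

lemma q_0: "q p 0 = 0"
proof -
  have "LIS t \<noteq> 0" for t using LIS_pos[of t] by simp
  then have e: "{t. LIS t = 0} = {}" by auto
  show ?thesis unfolding q_def e by simp
qed

lemma q_pos: "k \<ge> 1 \<Longrightarrow> q p k > 0"
proof -
  assume k: "k \<ge> 1"
  define t where "t = comb (k - 1)"
  have t: "LIS t = k" using k by (simp add: t_def LIS_comb)
  have "infsum (bgw_prob p) {t} \<le> infsum (bgw_prob p) {t. LIS t = k}"
    using t by (intro infsum_mono_neutral summable_b[OF p0 p1] b_nonneg[OF p0 p1]) auto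
  moreover have "infsum (bgw_prob p) {t} = bgw_prob p t" by simp
  ultimately show ?thesis using b_pos[OF p0 p1, of t] by (simp add: q_def)
qed

lemma Lk: "infsum (bgw_prob p) {t. LIS t < k} = 1 - Q p k"
proof -
  have "infsum (bgw_prob p) ({t. LIS t < k} \<union> {t. LIS t \<ge> k}) = infsum (bgw_prob p) {t. LIS t < k} + infsum (bgw_prob p) {t. LIS t \<ge> k}"
    by (intro infsum_Un_disjoint summable_b[OF p0 p1]) auto
  moreover have "{t. LIS t < k} \<union> {t. LIS t \<ge> k} = UNIV" by auto
  ultimately show ?thesis using total[OF p0 p1] by (simp add: Q_def)
qed

lemma bb_prod: "infsum (bb p) (X \<times> Y) = infsum (bgw_prob p) X * infsum (bgw_prob p) Y"
  by (rule infsum_bb_prod[OF p0 p1])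

lemma sumpart: "infsum (bb p) (NT -` {t. LIS t = k}) = (\<Sum>i=0..k. q p i * q p (k-i))"
proof -
  have e: "NT -` {t. LIS t = k} = (\<Union>i\<in>{0..k}. {t. LIS t = i} \<times> {t. LIS t = k - i})"
    by (auto simp: NT_def LIS_Node)
  have "(\<Sum>i=0..k. infsum (bb p) ({t. LIS t = i} \<times> {t. LIS t = k - i})) = infsum (bb p) (\<Union>i\<in>{0..k}. {t. LIS t = i} \<times> {t. LIS t = k - i})"
    by (intro sum_infsum summable_bb[OF p0 p1]) auto
  then show ?thesis unfolding e by (simp add: bb_prod q_def)
qed

lemma maxpart: "infsum (bb p) (NF -` {t. LIS t = k}) = 2 * q p k * (1 - Q p k) + (q p k)^2"
proof -
  define E where "E = {t. LIS t = k}"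
  define L where "L = {t. LIS t < k}"
  have m: "x \<in> NF -` {t. LIS t = k} \<longleftrightarrow> max (LIS (fst x)) (LIS (snd x)) = k" for x
    by (cases x) (simp add: NF_def LIS_Node)
  have mm: "max a b = k \<longleftrightarrow> (a = k \<and> b < k) \<or> (a < k \<and> b = k) \<or> (a = k \<and> b = k)" for a b :: nat
    by auto
  have e: "NF -` {t. LIS t = k} = (E \<times> L \<union> L \<times> E) \<union> E \<times> E"
  proof (intro set_eqI)
    fix x show "x \<in> NF -` {t. LIS t = k} \<longleftrightarrow> x \<in> (E \<times> L \<union> L \<times> E) \<union> E \<times> E"
      unfolding m mm by (cases x) (auto simp: E_def L_def)
  qed
  have "infsum (bb p) ((E \<times> L \<union> L \<times> E) \<union> E \<times> E) = infsum (bb p) (E \<times> L \<union> L \<times> E) + infsum (bb p) (E \<times> E)"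
    by (intro infsum_Un_disjoint summable_bb[OF p0 p1]) (auto simp: E_def L_def)
  also have "infsum (bb p) (E \<times> L \<union> L \<times> E) = infsum (bb p) (E \<times> L) + infsum (bb p) (L \<times> E)"
    by (intro infsum_Un_disjoint summable_bb[OF p0 p1]) (auto simp: E_def L_def)
  finally have f: "infsum (bb p) ((E \<times> L \<union> L \<times> E) \<union> E \<times> E) = infsum (bb p) (E \<times> L) + infsum (bb p) (L \<times> E) + infsum (bb p) (E \<times> E)" .
  have qE: "infsum (bgw_prob p) E = q p k" by (simp add: E_def q_def)
  have qL: "infsum (bgw_prob p) L = 1 - Q p k" using Lk by (simp add: L_def)
  show ?thesis unfolding e f bb_prod qE qL by (simp add: power2_eq_square)
qed

lemma q_rec0: "k \<ge> 2 \<Longrightarrow> q p k = 1/2 * p * (\<Sum>i=0..k. q p i * q p (k-i)) + 1/2 * (1-p) * (2 * q p k * (1 - Q p k) + (q p k)^2)"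
proof -
  assume k: "k \<ge> 2"
  have "Leaf \<notin> {t. LIS t = k}" using k by simp
  then show ?thesis
    using decomp[OF p0 p1, of "{t. LIS t = k}"] sumpart maxpart by (simp add: q_def)
qed

lemma q_rec1: "k \<ge> 2 \<Longrightarrow> 2 * q p k * (p + (1-p) * Q p k) =
   2 * p * (\<Sum>i=1..(k-1) div 2. q p i * q p (k-i)) + (1-p) * (q p k)^2
   + p * (if even k then (q p (k div 2))^2 else 0)"
proof -
  assume k: "k \<ge> 2"
  define Hs where "Hs = (\<Sum>i=1..(k-1) div 2. q p i * q p (k-i))"
  define E where "E = (if even k then (q p (k div 2))^2 else 0)"
  have "(\<Sum>i=0..k. q p i * q p (k-i)) = 2 * Hs + E"
    unfolding Hs_def E_def using k by (intro halfsum q_0) auto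
  then have h: "q p k = 1/2 * p * (2 * Hs + E) + 1/2 * (1-p) * (2 * q p k * (1 - Q p k) + (q p k)^2)"
    using q_rec0[OF k] by simp
  have "2 * q p k * (p + (1-p) * Q p k) = 2 * p * Hs + (1-p) * (q p k)^2 + p * E"
    using h by algebra
  then show ?thesis by (simp add: Hs_def E_def)
qed

end


lemma q_rec:
  assumes p0: "0 < p" and p1: "p < 1" and k: "k \<ge> 2"
  shows "q p k = 1 / (1 + (1 - p) / p * Q p k) *
              ((\<Sum>i = 1..(k - 1) div 2. q p i * q p (k - i))
               + (1 - p) / (2 * p) * (q p k)^2
               + (if even k then 1/2 * (q p (k div 2))^2 else 0))"
proof -
  define Hs where "Hs = (\<Sum>i = 1..(k - 1) div 2. q p i * q p (k - i))"
  define E where "E = (if even k then (q p (k div 2))^2 else 0)"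
  have E2: "(if even k then 1/2 * (q p (k div 2))^2 else 0) = E / 2" by (simp add: E_def)
  have r: "2 * q p k * (p + (1-p) * Q p k) = 2 * p * Hs + (1-p) * (q p k)^2 + p * E"
    using q_rec1[OF p0 p1 k] by (simp add: Hs_def E_def)
  have Q0: "Q p k \<ge> 0" by (rule Q_nonneg[OF p0 p1])
  have D: "1 + (1 - p) / p * Q p k > 0" using p0 p1 Q0 by (simp add: add_pos_nonneg)
  have pD: "p * (1 + (1 - p) / p * Q p k) = p + (1-p) * Q p k" using p0 by (simp add: field_simps)
  have "q p k * (1 + (1 - p) / p * Q p k) = Hs + (1 - p) / (2 * p) * (q p k)^2 + E / 2"
  proof -
    have "2 * p * (q p k * (1 + (1 - p) / p * Q p k)) = 2 * p * (Hs + (1 - p) / (2 * p) * (q p k)^2 + E / 2)"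
    proof -
      have "2 * p * (q p k * (1 + (1 - p) / p * Q p k)) = 2 * q p k * (p * (1 + (1 - p) / p * Q p k))" by simp
      also have "\<dots> = 2 * p * Hs + (1-p) * (q p k)^2 + p * E" unfolding pD r ..
      also have "\<dots> = 2 * p * (Hs + (1 - p) / (2 * p) * (q p k)^2 + E / 2)" using p0 by (simp add: field_simps)
      finally show ?thesis .
    qed
    then show ?thesis using p0 by simp
  qed
  then have X: "q p k * (1 + (1 - p) / p * Q p k) = Hs + (1 - p) / (2 * p) * (q p k)^2 + (if even k then 1/2 * (q p (k div 2))^2 else 0)"
    unfolding E2 .
  define Dv where "Dv = 1 + (1 - p) / p * Q p k"
  define R where "R = Hs + (1 - p) / (2 * p) * (q p k)^2 + (if even k then 1/2 * (q p (k div 2))^2 else 0)"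
  have "q p k * Dv = R" "Dv > 0" using X D unfolding Dv_def R_def by auto
  then have "q p k = 1 / Dv * R" by (simp add: field_simps)
  then show ?thesis unfolding Dv_def R_def Hs_def .
qed

theorem lemma8p2:
  fixes p :: real and qh :: "nat \<Rightarrow> real"
  assumes "0 < p" and "p < 1"
    and pos: "\<And>k. k \<ge> 1 \<Longrightarrow> qh k > 0"
  shows "((\<exists>K. \<forall>k\<ge>K. qh k \<ge> 1 / (1 + (1 - p) / p * Q p k) *
              ((\<Sum>i = 1..(k - 1) div 2. q p i * qh (k - i))
               + (1 - p) / (2 * p) * (q p k)^2
               + (if even k then 1/2 * (q p (k div 2))^2 else 0)))
          \<longrightarrow> (\<exists>C>0. \<forall>k\<ge>1. q p k \<le> C * qh k))
       \<and> ((\<exists>K. \<forall>k\<ge>K. qh k \<le> 1 / (1 + (1 - p) / p * Q p k) *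
              (\<Sum>i = 1..(k - 1) div 2. q p i * qh (k - i)))
          \<longrightarrow> (\<exists>c>0. \<forall>k\<ge>1. c * qh k \<le> q p k))"
proof -
  note p0 = assms(1) and p1 = assms(2)
  define a where "a k = 1 / (1 + (1 - p) / p * Q p k)" for k
  define B where "B k = (1 - p) / (2 * p) * (q p k)^2 + (if even k then 1/2 * (q p (k div 2))^2 else 0)" for k
  have a_pos: "a k > 0" for k
  proof -
    have "Q p k \<ge> 0" by (rule Q_nonneg[OF p0 p1])
    then have "1 + (1 - p) / p * Q p k > 0" using p0 p1 by (simp add: add_pos_nonneg)
    then show ?thesis by (simp add: a_def)
  qed
  have B_nonneg: "B k \<ge> 0" for k using p0 p1 by (simp add: B_def)
  have qnn: "q p k \<ge> 0" for k by (rule q_nonneg[OF p0 p1])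
  have qpos: "k \<ge> 1 \<Longrightarrow> q p k > 0" for k by (rule q_pos[OF p0 p1])
  have rec: "k \<ge> 2 \<Longrightarrow> q p k = a k * ((\<Sum>i = 1..(k - 1) div 2. q p i * q p (k - i)) + B k)" for k
    using q_rec[OF p0 p1, of k] by (simp add: a_def B_def add.assoc)
  have idx: "1 \<le> k - i \<and> k - i < k" if "i \<in> {1..(k - 1) div 2}" "k \<ge> 2" for i k :: nat
    using that by auto
  show ?thesis
  proof (intro conjI impI)
    assume "\<exists>K. \<forall>k\<ge>K. qh k \<ge> 1 / (1 + (1 - p) / p * Q p k) *
              ((\<Sum>i = 1..(k - 1) div 2. q p i * qh (k - i))
               + (1 - p) / (2 * p) * (q p k)^2
               + (if even k then 1/2 * (q p (k div 2))^2 else 0))"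
    then obtain K where K: "\<And>k. k \<ge> K \<Longrightarrow> qh k \<ge> a k * ((\<Sum>i = 1..(k - 1) div 2. q p i * qh (k - i)) + B k)"
      by (auto simp: a_def B_def add.assoc)
    define K' where "K' = max K 2"
    define C where "C = 1 + (\<Sum>k\<in>{1..<K'}. q p k / qh k)"
    have sn: "(\<Sum>k\<in>{1..<K'}. q p k / qh k) \<ge> 0"
      using qnn pos by (intro sum_nonneg) (auto intro: divide_nonneg_pos)
    have C1: "C \<ge> 1" using sn by (simp add: C_def)
    have main: "k \<ge> 1 \<Longrightarrow> q p k \<le> C * qh k" for k
    proof (induction k rule: less_induct)
      case (less k)
      show ?case
      proof (cases "k < K'")
        case True
        have "q p k / qh k \<le> (\<Sum>k\<in>{1..<K'}. q p k / qh k)"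
          using True less.prems qnn pos by (intro member_le_sum) (auto intro: divide_nonneg_pos)
        then have "q p k / qh k \<le> C" by (simp add: C_def)
        then show ?thesis using pos[OF less.prems] by (simp add: divide_le_eq)
      next
        case False
        then have k2: "k \<ge> 2" and kK: "k \<ge> K" by (auto simp: K'_def)
        have "(\<Sum>i = 1..(k - 1) div 2. q p i * q p (k - i)) \<le> (\<Sum>i = 1..(k - 1) div 2. q p i * (C * qh (k - i)))"
        proof (rule sum_mono)
          fix i assume i: "i \<in> {1..(k - 1) div 2}"
          then have "q p (k - i) \<le> C * qh (k - i)" using idx[OF i k2] less.IH by auto
          then show "q p i * q p (k - i) \<le> q p i * (C * qh (k - i))" using qnn by (intro mult_left_mono) auto
        qed
        also have "\<dots> = C * (\<Sum>i = 1..(k - 1) div 2. q p i * qh (k - i))"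
          by (simp add: sum_distrib_left algebra_simps)
        finally have Hle: "(\<Sum>i = 1..(k - 1) div 2. q p i * q p (k - i)) \<le> C * (\<Sum>i = 1..(k - 1) div 2. q p i * qh (k - i))" .
        have "B k \<le> C * B k" using C1 B_nonneg[of k] by (simp add: mult_le_cancel_right1)
        with Hle have "(\<Sum>i = 1..(k - 1) div 2. q p i * q p (k - i)) + B k \<le> C * ((\<Sum>i = 1..(k - 1) div 2. q p i * qh (k - i)) + B k)"
          by (simp add: algebra_simps)
        then have "q p k \<le> a k * (C * ((\<Sum>i = 1..(k - 1) div 2. q p i * qh (k - i)) + B k))"
          unfolding rec[OF k2] using a_pos[of k] by (intro mult_left_mono) auto
        also have "\<dots> = C * (a k * ((\<Sum>i = 1..(k - 1) div 2. q p i * qh (k - i)) + B k))" by simp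
        also have "\<dots> \<le> C * qh k" using K[OF kK] C1 by (intro mult_left_mono) auto
        finally show ?thesis .
      qed
    qed
    show "\<exists>C>0. \<forall>k\<ge>1. q p k \<le> C * qh k" using main C1 by (intro exI[of _ C]) auto
  next
    assume "\<exists>K. \<forall>k\<ge>K. qh k \<le> 1 / (1 + (1 - p) / p * Q p k) *
              (\<Sum>i = 1..(k - 1) div 2. q p i * qh (k - i))"
    then obtain K where K: "\<And>k. k \<ge> K \<Longrightarrow> qh k \<le> a k * (\<Sum>i = 1..(k - 1) div 2. q p i * qh (k - i))"
      by (auto simp: a_def)
    define K' where "K' = max K 2"
    define c where "c = 1 / (1 + (\<Sum>k\<in>{1..<K'}. qh k / q p k))"
    have sn: "(\<Sum>k\<in>{1..<K'}. qh k / q p k) \<ge> 0"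
      using qpos pos by (intro sum_nonneg) (auto intro: divide_nonneg_pos less_imp_le)
    have c0: "c > 0" using sn by (simp add: c_def)
    have main: "k \<ge> 1 \<Longrightarrow> c * qh k \<le> q p k" for k
    proof (induction k rule: less_induct)
      case (less k)
      show ?case
      proof (cases "k < K'")
        case True
        have "qh k / q p k \<le> (\<Sum>k\<in>{1..<K'}. qh k / q p k)"
          using True less.prems qpos pos by (intro member_le_sum) (auto intro: divide_nonneg_pos less_imp_le)
        then have "qh k / q p k \<le> 1 / c" by (simp add: c_def)
        then have "qh k \<le> q p k / c" using qpos[OF less.prems] by (simp add: divide_le_eq)
        then show ?thesis using c0 by (simp add: le_divide_eq mult.commute)
      next
        case False
        then have k2: "k \<ge> 2" and kK: "k \<ge> K" by (auto simp: K'_def)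
        have "c * qh k \<le> c * (a k * (\<Sum>i = 1..(k - 1) div 2. q p i * qh (k - i)))"
          using K[OF kK] c0 by (intro mult_left_mono) auto
        also have "\<dots> = a k * (\<Sum>i = 1..(k - 1) div 2. q p i * (c * qh (k - i)))"
          by (simp add: sum_distrib_left algebra_simps)
        also have "\<dots> \<le> a k * (\<Sum>i = 1..(k - 1) div 2. q p i * q p (k - i))"
        proof -
          have "(\<Sum>i = 1..(k - 1) div 2. q p i * (c * qh (k - i))) \<le> (\<Sum>i = 1..(k - 1) div 2. q p i * q p (k - i))"
          proof (rule sum_mono)
            fix i assume i: "i \<in> {1..(k - 1) div 2}"
            then have "c * qh (k - i) \<le> q p (k - i)" using idx[OF i k2] less.IH by auto
            then show "q p i * (c * qh (k - i)) \<le> q p i * q p (k - i)" using qnn by (intro mult_left_mono) auto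
          qed
          then show ?thesis using a_pos[of k] by (intro mult_left_mono) auto
        qed
        also have "\<dots> \<le> a k * ((\<Sum>i = 1..(k - 1) div 2. q p i * q p (k - i)) + B k)"
          using a_pos[of k] B_nonneg[of k] by (intro mult_left_mono) auto
        also have "\<dots> = q p k" using rec[OF k2] by simp
        finally show ?thesis .
      qed
    qed
    show "\<exists>c>0. \<forall>k\<ge>1. c * qh k \<le> q p k" using main c0 by (intro exI[of _ c]) auto
  qed
qed


end
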